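(* Let $X$ be a compact metric space, $T:X\to X$ continuous, $\Phi=\{\phi_n\}$ a supadditive potential on $X$, $k$ a positive integer, and $\mu$ an ergodic $T$-invariant Borel probability measure. Then there is a constant $C$ such that for every $\eta>0$ there exists $\epsilon_0>0$ such that for all $0<\epsilon<\epsilon_0$, $n\ge1$ and $\delta\in(0,1)$, \[ P_\mu(T,\Phi,n,\epsilon,\delta)\ge e^{-n\eta-C}\,P_\mu\big(T,\tfrac{\phi_k}{k},n,\epsilon,\delta\big), \] and consequently $P_\mu(T,\Phi)\ge P_\mu\big(T,\tfrac{\phi_k}{k}\big)$.
   Context: $B_n(x,\epsilon)=\{y:d(T^ix,T^iy)<\epsilon,\ 0\le i\le n-1\}$. Supadditive potential: continuous $\phi_n$ with $\phi_{n+m}(x)\ge\phi_n(x)+\phi_m(T^nx)$. $F\subseteq X$ is $(n,\epsilon,\delta)$-spanning if $\mu(\bigcup_{x\in F}B_n(x,\epsilon))\ge1-\delta$. For $\Phi$: $P_\mu(T,\Phi,n,\epsilon,\delta)=\inf\{\sum_{x\in F}e^{\phi_n(x)}:F\ (n,\epsilon,\delta)\text{-spanning}\}$ and $P_\mu(T,\Phi)=\lim_{\delta\to0}\lim_{\epsilon\to0}\limsup_{n\to\infty}\frac1n\log P_\mu(T,\Phi,n,\epsilon,\delta)$. For a continuous function $\psi$ with $g_n=\sum_{i=0}^{n-1}\psi\circ T^i$: $P_\mu(T,\psi,n,\epsilon,\delta)=\inf\{\sum_{x\in F}\exp(\sup_{y\in B_n(x,\epsilon)}g_n(y)):F\ (n,\epsilon,\delta)\text{-spanning}\}$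 and $P_\mu(T,\psi)=\lim_{\delta\to0}\liminf_{\epsilon\to0}\limsup_{n\to\infty}\frac1n\log P_\mu(T,\psi,n,\epsilon,\delta)$. *)

theory Defs
  imports "HOL-Probability.Probability"
begin

definition bowen_ball :: "('a::metric_space \<Rightarrow> 'a) \<Rightarrow> nat \<Rightarrow> 'a \<Rightarrow> real \<Rightarrow> 'a set" where
  "bowen_ball T n x \<epsilon> = {y. \<forall>i<n. dist ((T ^^ i) x) ((T ^^ i) y) < \<epsilon>}"

definition spanning :: "'a measure \<Rightarrow> ('a::metric_space \<Rightarrow> 'a) \<Rightarrow> nat \<Rightarrow> real \<Rightarrow> real \<Rightarrow> 'a set \<Rightarrow> bool" where
  "spanning M T n \<epsilon> \<delta> F \<longleftrightarrow> finite F \<and>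
     measure M (\<Union>x\<in>F. bowen_ball T n x \<epsilon>) \<ge> 1 - \<delta>"

definition supadditive_potential :: "('a::metric_space \<Rightarrow> 'a) \<Rightarrow> (nat \<Rightarrow> 'a \<Rightarrow> real) \<Rightarrow> bool" where
  "supadditive_potential T \<phi> \<longleftrightarrow>
     (\<forall>n\<ge>1. continuous_on UNIV (\<phi> n)) \<and>
     (\<forall>n\<ge>1. \<forall>m\<ge>1. \<forall>x. \<phi> (n + m) x \<ge> \<phi> n x + \<phi> m ((T ^^ n) x))"

definition pressure_pot_n :: "'a measure \<Rightarrow> ('a::metric_space \<Rightarrow> 'a) \<Rightarrow> (nat \<Rightarrow> 'a \<Rightarrow> real)
    \<Rightarrow> nat \<Rightarrow> real \<Rightarrow> real \<Rightarrow> real" where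
  "pressure_pot_n M T \<phi> n \<epsilon> \<delta> =
     Inf {(\<Sum>x\<in>F. exp (\<phi> n x)) | F. spanning M T n \<epsilon> \<delta> F}"

definition birkhoff_sum :: "('a \<Rightarrow> 'a) \<Rightarrow> ('a \<Rightarrow> real) \<Rightarrow> nat \<Rightarrow> 'a \<Rightarrow> real" where
  "birkhoff_sum T \<psi> n y = (\<Sum>i<n. \<psi> ((T ^^ i) y))"

definition pressure_fun_n :: "'a measure \<Rightarrow> ('a::metric_space \<Rightarrow> 'a) \<Rightarrow> ('a \<Rightarrow> real)
    \<Rightarrow> nat \<Rightarrow> real \<Rightarrow> real \<Rightarrow> real" where
  "pressure_fun_n M T \<psi> n \<epsilon> \<delta> =
     Inf {(\<Sum>x\<in>F. exp (SUP y\<in>bowen_ball T n x \<epsilon>. birkhoff_sum T \<psi> n y)) | F. spanning M T n \<epsilon> \<delta> F}"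

definition pressure_pot :: "'a measure \<Rightarrow> ('a::metric_space \<Rightarrow> 'a) \<Rightarrow> (nat \<Rightarrow> 'a \<Rightarrow> real) \<Rightarrow> ereal" where
  "pressure_pot M T \<phi> =
     Lim (at_right 0) (\<lambda>\<delta>. Lim (at_right 0) (\<lambda>\<epsilon>.
        limsup (\<lambda>n. ereal (ln (pressure_pot_n M T \<phi> n \<epsilon> \<delta>) / real n))))"

definition pressure_fun :: "'a measure \<Rightarrow> ('a::metric_space \<Rightarrow> 'a) \<Rightarrow> ('a \<Rightarrow> real) \<Rightarrow> ereal" where
  "pressure_fun M T \<psi> =
     Lim (at_right 0) (\<lambda>\<delta>. Liminf (at_right 0) (\<lambda>\<epsilon>.
        limsup (\<lambda>n. ereal (ln (pressure_fun_n M T \<psi> n \<epsilon> \<delta>) / real n))))"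

definition invariant_measure :: "'a measure \<Rightarrow> ('a \<Rightarrow> 'a) \<Rightarrow> bool" where
  "invariant_measure M T \<longleftrightarrow> T \<in> measurable M M \<and> distr M M T = M"

definition ergodic :: "'a measure \<Rightarrow> ('a \<Rightarrow> 'a) \<Rightarrow> bool" where
  "ergodic M T \<longleftrightarrow> invariant_measure M T \<and>
     (\<forall>A\<in>sets M. T -` A \<inter> space M = A \<longrightarrow> measure M A = 0 \<or> measure M A = 1)"

end

theory Submission
  imports Defs
begin

lemma pot_bounded1:
  fixes T :: "'a::metric_space \<Rightarrow> 'a"
  assumes "compact (UNIV :: 'a::metric_space set)" "supadditive_potential T \<phi>" "n \<ge> 1"
  shows "\<exists>B. \<forall>x. \<bar>\<phi> n x\<bar> \<le> B"
proof -
  have "continuous_on UNIV (\<phi> n)" using assms unfolding supadditive_potential_def by auto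
  hence "compact (range (\<phi> n))" using assms(1) compact_continuous_image by blast
  hence "bounded (range (\<phi> n))" by (rule compact_imp_bounded)
  then show ?thesis unfolding bounded_iff by auto
qed

lemma pot_boundedk:
  fixes T :: "'a::metric_space \<Rightarrow> 'a"
  assumes "compact (UNIV :: 'a::metric_space set)" "supadditive_potential T \<phi>"
  shows "\<exists>B. \<forall>j\<in>{1..k}. \<forall>x. \<bar>\<phi> j x\<bar> \<le> B"
proof -
  have "\<forall>j\<in>{1..k}. \<exists>B. \<forall>x. \<bar>\<phi> j x\<bar> \<le> B" using pot_bounded1[OF assms] by auto
  then obtain b where b: "\<forall>j\<in>{1..k}. \<forall>x. \<bar>\<phi> j x\<bar> \<le> b j" by metis
  show ?thesis
  proof (rule exI[of _ "Max (b ` {1..k})"], intro ballI allI)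
    fix j x assume j: "j \<in> {1..k}"
    have "\<bar>\<phi> j x\<bar> \<le> b j" using b j by auto
    also have "\<dots> \<le> Max (b ` {1..k})" using j by auto
    finally show "\<bar>\<phi> j x\<bar> \<le> Max (b ` {1..k})" .
  qed
qed

lemma block_sum:
  assumes "supadditive_potential T \<phi>" "k \<ge> 1" "q \<ge> 1"
  shows "(\<Sum>l<q. \<phi> k ((T ^^ (l*k)) x)) \<le> \<phi> (q*k) x"
  using assms(3)
proof (induction q rule: dec_induct)
  case base then show ?case by simp
next
  case (step q)
  have "\<phi> (q*k + k) x \<ge> \<phi> (q*k) x + \<phi> k ((T ^^ (q*k)) x)"
    using assms step.hyps unfolding supadditive_potential_def
    by (metis (no_types) le_trans mult_le_mono nat_mult_1)
  then show ?case using step.IH by (simp add: add.commute)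
qed

lemma blockQ:
  assumes "supadditive_potential T \<phi>" "k \<ge> 1" "n \<ge> 1"
    and B: "\<forall>j\<in>{1..k}. \<forall>x. \<bar>\<phi> j x\<bar> \<le> B"
  shows "(\<Sum>l<n div k. \<phi> k ((T ^^ (l*k)) x)) \<le> \<phi> n x + B"
proof -
  define q r where "q = n div k" and "r = n mod k"
  have n: "n = q*k + r" unfolding q_def r_def by simp
  have rk: "r < k" unfolding r_def using assms(2) by simp
  have B0: "B \<ge> 0" using B assms(2) by (meson abs_ge_zero atLeastAtMost_iff le_refl order_trans)
  have nq: "n div k = q" unfolding q_def by simp
  show ?thesis unfolding nq
  proof (cases "q = 0")
    case True
    then have "n \<in> {1..k}" using n rk assms by auto
    then have "\<bar>\<phi> n x\<bar> \<le> B" using B[rule_format] by simp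
    then show "(\<Sum>l<q. \<phi> k ((T ^^ (l*k)) x)) \<le> \<phi> n x + B" using True by simp
  next
    case False
    have bs: "(\<Sum>l<q. \<phi> k ((T ^^ (l*k)) x)) \<le> \<phi> (q*k) x" using block_sum[OF assms(1,2), of q] False by simp
    show "(\<Sum>l<q. \<phi> k ((T ^^ (l*k)) x)) \<le> \<phi> n x + B"
    proof (cases "r = 0")
      case True
      then have "\<phi> n x = \<phi> (q*k) x" using n by simp
      then show ?thesis using bs B0 by simp
    next
      case False
      have qk: "q*k \<ge> 1" using \<open>q \<noteq> 0\<close> assms(2) by simp
      have "\<phi> (q*k + r) x \<ge> \<phi> (q*k) x + \<phi> r ((T ^^ (q*k)) x)"
        using assms(1) qk False unfolding supadditive_potential_def by simp
      moreover have "\<bar>\<phi> r ((T ^^ (q*k)) x)\<bar> \<le> B" using B[rule_format, of r] False rk by simp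
      moreover have "\<phi> n x = \<phi> (q*k + r) x" using n by simp
      ultimately show ?thesis using bs by linarith
    qed
  qed
qed


lemma reidx_set:
  fixes n j k :: nat
  assumes "k \<ge> 1" "j < k"
  shows "(\<lambda>l. j + l*k) ` {..<(n-j) div k} = {i\<in>{..<n}. i + k \<le> n \<and> i mod k = j}"
proof -
  have kp: "k > 0" using assms(1) by simp
  have iff: "l < (n-j) div k \<longleftrightarrow> Suc l * k \<le> n - j" for l
    using less_eq_div_iff_mult_less_eq[OF kp, of "Suc l" "n-j"] by (simp only: Suc_le_eq)
  show ?thesis
  proof (intro equalityI subsetI)
    fix i assume "i \<in> (\<lambda>l. j + l*k) ` {..<(n-j) div k}"
    then obtain l where l: "l < (n-j) div k" "i = j + l*k" by auto
    have a: "Suc l * k \<le> n - j" using iff l(1) by blast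
    have e: "i + k = j + Suc l * k" using l(2) by simp
    have "k \<le> Suc l * k" by simp
    hence "i + k \<le> n" using a e assms(1) by arith
    moreover have "i mod k = j" using l(2) assms by simp
    moreover have "i < n" using \<open>i + k \<le> n\<close> assms by arith
    ultimately show "i \<in> {i\<in>{..<n}. i + k \<le> n \<and> i mod k = j}" by simp
  next
    fix i assume "i \<in> {i\<in>{..<n}. i + k \<le> n \<and> i mod k = j}"
    hence i: "i < n" "i + k \<le> n" "i mod k = j" by auto
    define l where "l = i div k"
    have "i mod k + i div k * k = i" by (rule mod_div_mult_eq)
    hence il: "i = j + l*k" using i(3) unfolding l_def by simp
    have e: "i + k = j + Suc l * k" using il by simp
    have "Suc l * k \<le> n - j" using i(2) e by arith
    hence "l < (n-j) div k" using iff by blast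
    then show "i \<in> (\<lambda>l. j + l*k) ` {..<(n-j) div k}" using il by auto
  qed
qed

lemma reidx_sum:
  fixes n j k :: nat and f :: "nat \<Rightarrow> real"
  assumes "k \<ge> 1" "j < k"
  shows "(\<Sum>i\<in>{i\<in>{..<n}. i + k \<le> n \<and> i mod k = j}. f i) = (\<Sum>l<(n-j) div k. f (j + l*k))"
proof -
  have "inj_on (\<lambda>l. j + l*k) {..<(n-j) div k}" using assms(1) by (auto simp: inj_on_def)
  then have "(\<Sum>i\<in>(\<lambda>l. j + l*k) ` {..<(n-j) div k}. f i) = (\<Sum>l<(n-j) div k. f (j + l*k))"
    by (simp add: sum.reindex)
  then show ?thesis unfolding reidx_set[OF assms, of n] .
qed

lemma blockJ:
  assumes sp: "supadditive_potential T \<phi>" and k: "k \<ge> 1" and n: "n \<ge> 1" and jk: "j < k"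
    and B: "\<forall>j\<in>{1..k}. \<forall>x. \<bar>\<phi> j x\<bar> \<le> B"
  shows "(\<Sum>i\<in>{i\<in>{..<n}. i + k \<le> n \<and> i mod k = j}. \<phi> k ((T ^^ i) x)) \<le> \<phi> n x + 2*B"
proof -
  have B0: "B \<ge> 0" using B k by (meson abs_ge_zero atLeastAtMost_iff le_refl order_trans)
  have eq: "(\<Sum>i\<in>{i\<in>{..<n}. i + k \<le> n \<and> i mod k = j}. \<phi> k ((T ^^ i) x))
      = (\<Sum>l<(n-j) div k. \<phi> k ((T ^^ (j + l*k)) x))"
    by (rule reidx_sum[OF k jk])
  show ?thesis
  proof (cases "j = 0")
    case True
    have "(\<Sum>l<n div k. \<phi> k ((T ^^ (l*k)) x)) \<le> \<phi> n x + B" by (rule blockQ[OF sp k n B])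
    then show ?thesis using eq True B0 by simp
  next
    case False
    show ?thesis
    proof (cases "n \<le> j")
      case True
      then have "(n-j) div k = 0" by simp
      moreover have "n \<in> {1..k}" using True n jk by simp
      then have "\<bar>\<phi> n x\<bar> \<le> B" using B[rule_format] by simp
      ultimately show ?thesis using eq B0 by simp
    next
      case nj: False
      have n1: "n - j \<ge> 1" using nj by simp
      have j1: "j \<ge> 1" using False by simp
      have "\<phi> (j + (n-j)) x \<ge> \<phi> j x + \<phi> (n-j) ((T ^^ j) x)"
        using sp n1 j1 unfolding supadditive_potential_def by blast
      moreover have "j + (n-j) = n" using nj by simp
      moreover have "\<bar>\<phi> j x\<bar> \<le> B" using B[rule_format, of j] j1 jk by simp
      moreover have "(\<Sum>l<(n-j) div k. \<phi> k ((T ^^ (l*k)) ((T ^^ j) x))) \<le> \<phi> (n-j) ((T ^^ j) x) + B"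
        by (rule blockQ[OF sp k n1 B])
      moreover have "(\<Sum>l<(n-j) div k. \<phi> k ((T ^^ (l*k)) ((T ^^ j) x)))
          = (\<Sum>l<(n-j) div k. \<phi> k ((T ^^ (j + l*k)) x))"
        by (rule sum.cong[OF refl]) (simp only: add.commute[of j] funpow_add comp_def)
      ultimately show ?thesis using eq by simp
    qed
  qed
qed

lemma key_bound:
  assumes sp: "supadditive_potential T \<phi>" and k: "k \<ge> 1" and n: "n \<ge> 1"
    and B: "\<forall>j\<in>{1..k}. \<forall>x. \<bar>\<phi> j x\<bar> \<le> B"
  shows "birkhoff_sum T (\<lambda>x. \<phi> k x / real k) n x \<le> \<phi> n x + 3*B"
proof -
  define f where "f i = \<phi> k ((T ^^ i) x)" for i
  have B0: "B \<ge> 0" using B k by (meson abs_ge_zero atLeastAtMost_iff le_refl order_trans)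
  have bk: "\<bar>f i\<bar> \<le> B" for i using B[rule_format, of k] k unfolding f_def by simp
  have bs: "birkhoff_sum T (\<lambda>x. \<phi> k x / real k) n x = (\<Sum>i<n. f i) / real k"
    unfolding birkhoff_sum_def f_def by (simp add: sum_divide_distrib)
  have split: "(\<Sum>i<n. f i) = (\<Sum>i<n. if i + k \<le> n then f i else 0) + (\<Sum>i<n. if i + k \<le> n then 0 else f i)"
    unfolding sum.distrib[symmetric] by (rule sum.cong) auto
  have "(\<Sum>i<n. if i + k \<le> n then 0 else f i) = (\<Sum>i\<in>{n-k..<n}. if i + k \<le> n then 0 else f i)"
    by (rule sum.mono_neutral_right) auto
  also have "\<dots> \<le> (\<Sum>i\<in>{n-k..<n}. B)"
    by (rule sum_mono) (use bk B0 in \<open>auto simp: abs_le_iff\<close>)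
  also have "\<dots> = real (n - (n-k)) * B" by simp
  also have "\<dots> \<le> real k * B" using B0 by (intro mult_right_mono) auto
  finally have s2: "(\<Sum>i<n. if i + k \<le> n then 0 else f i) \<le> real k * B" .
  have inner: "(\<Sum>j<k. if i mod k = j then g else 0) = g" for i and g :: real
    using k by (simp add: sum.delta)
  have "(\<Sum>i<n. if i + k \<le> n then f i else 0)
      = (\<Sum>i<n. \<Sum>j<k. if i mod k = j then (if i + k \<le> n then f i else 0) else 0)"
    by (simp only: inner)
  also have "\<dots> = (\<Sum>j<k. \<Sum>i<n. if i mod k = j then (if i + k \<le> n then f i else 0) else 0)"
    by (rule sum.swap)
  also have "\<dots> = (\<Sum>j<k. \<Sum>i\<in>{i\<in>{..<n}. i + k \<le> n \<and> i mod k = j}. f i)"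
  proof (rule sum.cong[OF refl])
    fix j
    have "(\<Sum>i<n. if i mod k = j then (if i + k \<le> n then f i else 0) else 0)
        = (\<Sum>i<n. if i + k \<le> n \<and> i mod k = j then f i else 0)"
      by (rule sum.cong) auto
    also have "\<dots> = (\<Sum>i\<in>{i\<in>{..<n}. i + k \<le> n \<and> i mod k = j}. f i)"
      by (rule sum.inter_filter[symmetric]) simp
    finally show "(\<Sum>i<n. if i mod k = j then (if i + k \<le> n then f i else 0) else 0)
        = (\<Sum>i\<in>{i\<in>{..<n}. i + k \<le> n \<and> i mod k = j}. f i)" .
  qed
  also have "\<dots> \<le> (\<Sum>j<k. \<phi> n x + 2*B)"
    by (rule sum_mono) (use blockJ[OF sp k n _ B] in \<open>simp add: f_def\<close>)
  also have "\<dots> = real k * (\<phi> n x + 2*B)" by simp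
  finally have s1: "(\<Sum>i<n. if i + k \<le> n then f i else 0) \<le> real k * (\<phi> n x + 2*B)" .
  have "(\<Sum>i<n. f i) \<le> real k * (\<phi> n x + 3*B)" using split s1 s2 by (simp add: algebra_simps)
  then have "(\<Sum>i<n. f i) / real k \<le> \<phi> n x + 3*B" using k by (simp add: divide_le_eq mult.commute)
  then show ?thesis using bs by simp
qed

lemma cont_funpow:
  fixes T :: "'a::topological_space \<Rightarrow> 'a"
  assumes "continuous_on UNIV T"
  shows "continuous_on UNIV (T ^^ i)"
proof (induction i)
  case 0
  have "T ^^ 0 = (\<lambda>x. x)" by (simp add: fun_eq_iff)
  then show ?case by (simp add: continuous_on_id)
next
  case (Suc i)
  have "continuous_on UNIV (\<lambda>x. T ((T ^^ i) x))"
    by (rule continuous_on_compose2[OF assms Suc]) simp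
  then show ?case by (simp add: comp_def)
qed

lemma bowen_open:
  assumes "continuous_on UNIV T"
  shows "open (bowen_ball T n x \<epsilon>)"
proof -
  have eq: "bowen_ball T n x \<epsilon> = (\<Inter>i\<in>{..<n}. (T ^^ i) -` ball ((T ^^ i) x) \<epsilon>)"
    by (auto simp: bowen_ball_def mem_ball)
  have "open ((T ^^ i) -` ball ((T ^^ i) x) \<epsilon>)" for i
    using cont_funpow[OF assms, of i] continuous_on_open_vimage[of UNIV "T ^^ i"] by auto
  then show ?thesis unfolding eq by auto
qed

lemma bowen_center: "\<epsilon> > 0 \<Longrightarrow> x \<in> bowen_ball T n x \<epsilon>"
  by (simp add: bowen_ball_def)

lemma bowen_mono: "\<epsilon>1 \<le> \<epsilon>2 \<Longrightarrow> bowen_ball T n x \<epsilon>1 \<subseteq> bowen_ball T n x \<epsilon>2"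
  by (auto simp: bowen_ball_def)

lemma span_exists:
  assumes "compact (UNIV :: 'a::metric_space set)" "continuous_on UNIV T"
    "prob_space M" "sets M = sets borel" "\<epsilon> > 0" "\<delta> \<ge> 0"
  shows "\<exists>F. spanning M T n \<epsilon> \<delta> (F :: 'a set)"
proof -
  have cov: "UNIV \<subseteq> (\<Union>x\<in>UNIV. bowen_ball T n x \<epsilon>)" using bowen_center[OF assms(5)] by blast
  have op: "\<And>x. x \<in> UNIV \<Longrightarrow> open (bowen_ball T n x \<epsilon>)" using bowen_open[OF assms(2)] by blast
  obtain F where F0: "F \<subseteq> UNIV" and F: "finite F" "UNIV \<subseteq> (\<Union>x\<in>F. bowen_ball T n x \<epsilon>)"
    by (rule compactE_image[OF assms(1) op cov])
  have sp: "space M = UNIV" using sets_eq_imp_space_eq[OF assms(4)] by simp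
  have "(\<Union>x\<in>F. bowen_ball T n x \<epsilon>) = space M" using F(2) sp by auto
  then have "measure M (\<Union>x\<in>F. bowen_ball T n x \<epsilon>) = 1"
    using prob_space.prob_space[OF assms(3)] by simp
  then show ?thesis using F(1) assms(6) unfolding spanning_def by auto
qed

lemma span_mono_eps:
  assumes "prob_space M" "sets M = sets borel" "continuous_on UNIV T"
    "\<epsilon>1 \<le> \<epsilon>2" "spanning M T n \<epsilon>1 \<delta> F"
  shows "spanning M T n \<epsilon>2 \<delta> F"
proof -
  have "open (\<Union>x\<in>F. bowen_ball T n x \<epsilon>2)" using bowen_open[OF assms(3)] by auto
  then have m: "(\<Union>x\<in>F. bowen_ball T n x \<epsilon>2) \<in> sets M" using assms(2) by simp
  have "(\<Union>x\<in>F. bowen_ball T n x \<epsilon>1) \<subseteq> (\<Union>x\<in>F. bowen_ball T n x \<epsilon>2)"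
    using bowen_mono[OF assms(4)] by blast
  then have "measure M (\<Union>x\<in>F. bowen_ball T n x \<epsilon>1) \<le> measure M (\<Union>x\<in>F. bowen_ball T n x \<epsilon>2)"
    using finite_measure.finite_measure_mono[OF prob_space.axioms(1)[OF assms(1)] _ m] by blast
  then show ?thesis using assms(5) unfolding spanning_def by auto
qed

lemma span_mono_delta:
  "\<delta>1 \<le> \<delta>2 \<Longrightarrow> spanning M T n \<epsilon> \<delta>1 F \<Longrightarrow> spanning M T n \<epsilon> \<delta>2 F"
  unfolding spanning_def by auto

lemma span_nonempty:
  "\<delta> < 1 \<Longrightarrow> spanning M T n \<epsilon> \<delta> F \<Longrightarrow> F \<noteq> {}"
  unfolding spanning_def by auto

lemma sum_exp_lower:
  assumes "finite F" "F \<noteq> {}" "\<And>x. x \<in> F \<Longrightarrow> c \<le> h x"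
  shows "exp c \<le> (\<Sum>x\<in>F. exp (h x :: real))"
proof -
  obtain x0 where x0: "x0 \<in> F" using assms(2) by blast
  have "exp c \<le> exp (h x0)" using assms(3)[OF x0] by simp
  also have "\<dots> \<le> (\<Sum>x\<in>F. exp (h x))"
    by (rule member_le_sum) (use x0 assms(1) in auto)
  finally show ?thesis .
qed

lemma birkhoff_abs:
  assumes "\<And>y. \<bar>\<psi> y\<bar> \<le> c"
  shows "\<bar>birkhoff_sum T \<psi> n y\<bar> \<le> real n * c"
proof -
  have "\<bar>birkhoff_sum T \<psi> n y\<bar> \<le> (\<Sum>i<n. \<bar>\<psi> ((T ^^ i) y)\<bar>)"
    unfolding birkhoff_sum_def by (rule sum_abs)
  also have "\<dots> \<le> (\<Sum>i<n. c)" by (rule sum_mono) (use assms in auto)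
  finally show ?thesis by simp
qed

lemma pot_pos:
  fixes T :: "'a::metric_space \<Rightarrow> 'a"
  assumes cpt: "compact (UNIV :: 'a::metric_space set)" and cT: "continuous_on UNIV T"
    and sp: "supadditive_potential T \<phi>" and P: "prob_space M" and S: "sets M = sets borel"
    and n: "n \<ge> 1" and e: "\<epsilon> > 0" and d0: "0 \<le> \<delta>" and d1: "\<delta> < 1"
  shows "pressure_pot_n M T \<phi> n \<epsilon> \<delta> > 0"
proof -
  obtain Bn where Bn: "\<forall>x. \<bar>\<phi> n x\<bar> \<le> Bn" using pot_bounded1[OF cpt sp n] by blast
  obtain F0 where F0: "spanning M T n \<epsilon> \<delta> (F0::'a set)" using span_exists[OF cpt cT P S e d0] by blast
  have "exp (-Bn) \<le> Inf {(\<Sum>x\<in>F. exp (\<phi> n x)) | F. spanning M T n \<epsilon> \<delta> F}"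
  proof (rule cInf_greatest)
    show "{(\<Sum>x\<in>F. exp (\<phi> n x)) | F. spanning M T n \<epsilon> \<delta> F} \<noteq> {}" using F0 by blast
  next
    fix s assume "s \<in> {(\<Sum>x\<in>F. exp (\<phi> n x)) | F. spanning M T n \<epsilon> \<delta> F}"
    then obtain F where F: "spanning M T n \<epsilon> \<delta> F" "s = (\<Sum>x\<in>F. exp (\<phi> n x))" by blast
    have "finite F" using F(1) unfolding spanning_def by simp
    moreover have "F \<noteq> {}" using span_nonempty[OF d1 F(1)] .
    moreover have "-Bn \<le> \<phi> n x" for x using Bn[rule_format, of x] by (simp add: abs_le_iff)
    ultimately have "exp (-Bn) \<le> (\<Sum>x\<in>F. exp (\<phi> n x))" by (rule sum_exp_lower)
    then show "exp (-Bn) \<le> s" using F(2) by simp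
  qed
  moreover have "0 < exp (-Bn)" by simp
  ultimately show ?thesis unfolding pressure_pot_n_def by linarith
qed

lemma fun_pos:
  fixes T :: "'a::metric_space \<Rightarrow> 'a"
  assumes cpt: "compact (UNIV :: 'a::metric_space set)" and cT: "continuous_on UNIV T"
    and bd: "\<And>y. \<bar>\<psi> y\<bar> \<le> c" and P: "prob_space M" and S: "sets M = sets borel"
    and e: "\<epsilon> > 0" and d0: "0 \<le> \<delta>" and d1: "\<delta> < 1"
  shows "pressure_fun_n M T \<psi> n \<epsilon> \<delta> > 0"
proof -
  have gb: "\<bar>birkhoff_sum T \<psi> n y\<bar> \<le> real n * c" for y by (rule birkhoff_abs[OF bd])
  obtain F0 where F0: "spanning M T n \<epsilon> \<delta> (F0::'a set)" using span_exists[OF cpt cT P S e d0] by blast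
  let ?S = "{(\<Sum>x\<in>F. exp (SUP y\<in>bowen_ball T n x \<epsilon>. birkhoff_sum T \<psi> n y)) | F. spanning M T n \<epsilon> \<delta> F}"
  have "exp (-(real n * c)) \<le> Inf ?S"
  proof (rule cInf_greatest)
    show "?S \<noteq> {}" using F0 by blast
  next
    fix s assume "s \<in> ?S"
    then obtain F where F: "spanning M T n \<epsilon> \<delta> F"
      "s = (\<Sum>x\<in>F. exp (SUP y\<in>bowen_ball T n x \<epsilon>. birkhoff_sum T \<psi> n y))" by blast
    have "finite F" using F(1) unfolding spanning_def by simp
    moreover have "F \<noteq> {}" using span_nonempty[OF d1 F(1)] .
    moreover have "-(real n * c) \<le> (SUP y\<in>bowen_ball T n x \<epsilon>. birkhoff_sum T \<psi> n y)" for x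
    proof -
      have "bdd_above ((\<lambda>y. birkhoff_sum T \<psi> n y) ` bowen_ball T n x \<epsilon>)"
        by (rule bdd_aboveI2[of _ _ "real n * c"]) (use gb in \<open>auto simp: abs_le_iff\<close>)
      then have "birkhoff_sum T \<psi> n x \<le> (SUP y\<in>bowen_ball T n x \<epsilon>. birkhoff_sum T \<psi> n y)"
        by (rule cSUP_upper[OF bowen_center[OF e]])
      moreover have "-(real n * c) \<le> birkhoff_sum T \<psi> n x" using gb[of x] by (auto simp: abs_le_iff)
      ultimately show ?thesis by linarith
    qed
    ultimately have "exp (-(real n * c)) \<le> (\<Sum>x\<in>F. exp (SUP y\<in>bowen_ball T n x \<epsilon>. birkhoff_sum T \<psi> n y))"
      by (rule sum_exp_lower)
    then show "exp (-(real n * c)) \<le> s" using F(2) by simp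
  qed
  moreover have "0 < exp (-(real n * c))" by simp
  ultimately show ?thesis unfolding pressure_fun_n_def by linarith
qed

lemma part1:
  fixes T :: "'a::metric_space \<Rightarrow> 'a"
  assumes cpt: "compact (UNIV :: 'a set)" and cT: "continuous_on UNIV T"
    and sp: "supadditive_potential T \<phi>" and k: "k \<ge> 1" and P: "prob_space M" and S: "sets M = sets borel"
  shows "\<exists>C. \<forall>\<eta>>0. \<exists>\<epsilon>0>0. \<forall>\<epsilon> n \<delta>. 0 < \<epsilon> \<and> \<epsilon> < \<epsilon>0 \<and> n \<ge> 1 \<and> 0 < \<delta> \<and> \<delta> < 1 \<longrightarrow>
            pressure_pot_n M T \<phi> n \<epsilon> \<delta> \<ge>
              exp (- real n * \<eta> - C) * pressure_fun_n M T (\<lambda>x. \<phi> k x / real k) n \<epsilon> \<delta>"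
proof -
  obtain B where B: "\<forall>j\<in>{1..k}. \<forall>x. \<bar>\<phi> j x\<bar> \<le> B" using pot_boundedk[OF cpt sp] by blast
  define \<psi> where "\<psi> = (\<lambda>x. \<phi> k x / real k)"
  have ck: "continuous_on UNIV (\<phi> k)" using sp k unfolding supadditive_potential_def by auto
  have cpsi: "continuous_on UNIV \<psi>" unfolding \<psi>_def
    by (intro continuous_intros ck) (use k in auto)
  have uc: "uniformly_continuous_on UNIV \<psi>" by (rule compact_uniformly_continuous[OF cpsi cpt])
  show ?thesis
  proof (rule exI[of _ "3*B"], intro allI impI)
    fix \<eta> :: real assume eta: "\<eta> > 0"
    obtain d where d: "d > 0" "\<forall>x\<in>UNIV. \<forall>x'\<in>UNIV. dist x' x < d \<longrightarrow> dist (\<psi> x') (\<psi> x) < \<eta>"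
      using uc eta unfolding uniformly_continuous_on_def by metis
    show "\<exists>\<epsilon>0>0. \<forall>\<epsilon> n \<delta>. 0 < \<epsilon> \<and> \<epsilon> < \<epsilon>0 \<and> n \<ge> 1 \<and> 0 < \<delta> \<and> \<delta> < 1 \<longrightarrow>
            pressure_pot_n M T \<phi> n \<epsilon> \<delta> \<ge>
              exp (- real n * \<eta> - 3*B) * pressure_fun_n M T (\<lambda>x. \<phi> k x / real k) n \<epsilon> \<delta>"
    proof (rule exI[of _ d], intro conjI allI impI)
      show "d > 0" by (rule d(1))
      fix \<epsilon> :: real and n :: nat and \<delta> :: real assume H: "0 < \<epsilon> \<and> \<epsilon> < d \<and> n \<ge> 1 \<and> 0 < \<delta> \<and> \<delta> < 1"
      hence e: "\<epsilon> > 0" "\<epsilon> < d" and n: "n \<ge> 1" and dl: "0 < \<delta>" "\<delta> < 1" by auto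
      define c where "c = exp (- real n * \<eta> - 3*B)"
      let ?A = "{(\<Sum>x\<in>F. exp (\<phi> n x)) | F. spanning M T n \<epsilon> \<delta> F}"
      let ?B = "{(\<Sum>x\<in>F. exp (SUP y\<in>bowen_ball T n x \<epsilon>. birkhoff_sum T \<psi> n y)) | F. spanning M T n \<epsilon> \<delta> F}"
      have fun_eq: "pressure_fun_n M T (\<lambda>x. \<phi> k x / real k) n \<epsilon> \<delta> = Inf ?B"
        unfolding pressure_fun_n_def \<psi>_def by simp
      have pot_eq: "pressure_pot_n M T \<phi> n \<epsilon> \<delta> = Inf ?A" unfolding pressure_pot_n_def by simp
      obtain F0 where F0: "spanning M T n \<epsilon> \<delta> (F0::'a set)"
        using span_exists[OF cpt cT P S e(1), of \<delta>] dl by auto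
      have bddB: "bdd_below ?B"
      proof (rule bdd_belowI[of _ 0])
        fix s assume "s \<in> ?B"
        then obtain F where "s = (\<Sum>x\<in>F. exp (SUP y\<in>bowen_ball T n x \<epsilon>. birkhoff_sum T \<psi> n y))" by blast
        then show "0 \<le> s" by (simp add: sum_nonneg)
      qed
      have trm: "c * exp (SUP y\<in>bowen_ball T n x \<epsilon>. birkhoff_sum T \<psi> n y) \<le> exp (\<phi> n x)" for x
      proof -
        have "(SUP y\<in>bowen_ball T n x \<epsilon>. birkhoff_sum T \<psi> n y) \<le> birkhoff_sum T \<psi> n x + real n * \<eta>"
        proof (rule cSUP_least)
          show "bowen_ball T n x \<epsilon> \<noteq> {}" using bowen_center[OF e(1)] by blast
        next
          fix y assume y: "y \<in> bowen_ball T n x \<epsilon>"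
          have "(\<Sum>i<n. \<psi> ((T ^^ i) y)) \<le> (\<Sum>i<n. \<psi> ((T ^^ i) x) + \<eta>)"
          proof (rule sum_mono)
            fix i assume "i \<in> {..<n}"
            then have "dist ((T ^^ i) x) ((T ^^ i) y) < \<epsilon>" using y unfolding bowen_ball_def by simp
            then have "dist ((T ^^ i) y) ((T ^^ i) x) < d" using e by (simp add: dist_commute)
            then have "dist (\<psi> ((T ^^ i) y)) (\<psi> ((T ^^ i) x)) < \<eta>" using d(2) by blast
            then show "\<psi> ((T ^^ i) y) \<le> \<psi> ((T ^^ i) x) + \<eta>" by (simp add: dist_real_def abs_less_iff)
          qed
          then show "birkhoff_sum T \<psi> n y \<le> birkhoff_sum T \<psi> n x + real n * \<eta>"
            unfolding birkhoff_sum_def by (simp add: sum.distrib)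
        qed
        moreover have "birkhoff_sum T \<psi> n x \<le> \<phi> n x + 3*B"
          using key_bound[OF sp k n B] unfolding \<psi>_def by blast
        ultimately have "- real n * \<eta> - 3*B + (SUP y\<in>bowen_ball T n x \<epsilon>. birkhoff_sum T \<psi> n y) \<le> \<phi> n x"
          by linarith
        then have "exp (- real n * \<eta> - 3*B + (SUP y\<in>bowen_ball T n x \<epsilon>. birkhoff_sum T \<psi> n y)) \<le> exp (\<phi> n x)"
          by simp
        then show ?thesis unfolding c_def by (simp add: exp_add)
      qed
      have "c * Inf ?B \<le> Inf ?A"
      proof (rule cInf_greatest)
        show "?A \<noteq> {}" using F0 by blast
      next
        fix a assume "a \<in> ?A"
        then obtain F where F: "spanning M T n \<epsilon> \<delta> F" "a = (\<Sum>x\<in>F. exp (\<phi> n x))" by blast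
        have "Inf ?B \<le> (\<Sum>x\<in>F. exp (SUP y\<in>bowen_ball T n x \<epsilon>. birkhoff_sum T \<psi> n y))"
          by (rule cInf_lower[OF _ bddB]) (use F(1) in blast)
        then have "c * Inf ?B \<le> c * (\<Sum>x\<in>F. exp (SUP y\<in>bowen_ball T n x \<epsilon>. birkhoff_sum T \<psi> n y))"
          unfolding c_def by (rule mult_left_mono) simp
        also have "\<dots> = (\<Sum>x\<in>F. c * exp (SUP y\<in>bowen_ball T n x \<epsilon>. birkhoff_sum T \<psi> n y))"
          by (rule sum_distrib_left)
        also have "\<dots> \<le> a" unfolding F(2) by (rule sum_mono) (rule trm)
        finally show "c * Inf ?B \<le> a" .
      qed
      then show "pressure_pot_n M T \<phi> n \<epsilon> \<delta> \<ge>
              exp (- real n * \<eta> - 3*B) * pressure_fun_n M T (\<lambda>x. \<phi> k x / real k) n \<epsilon> \<delta>"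
        unfolding fun_eq pot_eq c_def by simp
    qed
  qed
qed

lemma mono_lim_at_right:
  fixes f :: "real \<Rightarrow> ereal"
  assumes c: "c > 0" and mono: "\<And>x y. 0 < x \<Longrightarrow> x \<le> y \<Longrightarrow> y < c \<Longrightarrow> f y \<le> f x"
  shows "Lim (at_right 0) f = (SUP x\<in>{0<..<c}. f x)"
proof (rule tendsto_Lim)
  show "\<not> trivial_limit (at_right (0::real))" by simp
  show "(f \<longlongrightarrow> (SUP x\<in>{0<..<c}. f x)) (at_right 0)"
  proof (rule order_tendstoI)
    fix y assume "y < (SUP x\<in>{0<..<c}. f x)"
    then obtain x0 where x0: "x0 \<in> {0<..<c}" "y < f x0" by (auto simp: less_SUP_iff)
    have "eventually (\<lambda>x. x \<in> {0<..<x0}) (at_right (0::real))"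
      by (rule eventually_at_right_real) (use x0 in simp)
    then show "eventually (\<lambda>x. y < f x) (at_right 0)"
    proof (rule eventually_mono)
      fix x assume "x \<in> {0<..<x0}"
      then have "f x0 \<le> f x" using mono[of x x0] x0 by auto
      then show "y < f x" using x0 by simp
    qed
  next
    fix y assume y: "(SUP x\<in>{0<..<c}. f x) < y"
    have "eventually (\<lambda>x. x \<in> {0<..<c}) (at_right (0::real))"
      by (rule eventually_at_right_real) (use c in simp)
    then show "eventually (\<lambda>x. f x < y) (at_right 0)"
    proof (rule eventually_mono)
      fix x assume "x \<in> {0<..<c}"
      then have "f x \<le> (SUP x\<in>{0<..<c}. f x)" by (rule SUP_upper)
      then show "f x < y" using y by simp
    qed
  qed
qed

lemma inf_mono_sets:
  fixes h :: "'b \<Rightarrow> real"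
  assumes "\<And>F. P F \<Longrightarrow> Q F" "\<exists>F. P F" "\<And>F. Q F \<Longrightarrow> 0 \<le> h F"
  shows "Inf {h F | F. Q F} \<le> Inf {h F | F. P F}"
proof (rule cInf_superset_mono)
  show "{h F | F. P F} \<noteq> {}" using assms(2) by blast
  show "bdd_below {h F | F. Q F}"
  proof (rule bdd_belowI[of _ 0])
    fix s assume "s \<in> {h F | F. Q F}"
    then obtain F where "Q F" "s = h F" by blast
    then show "0 \<le> s" using assms(3) by simp
  qed
  show "{h F | F. P F} \<subseteq> {h F | F. Q F}" using assms(1) by blast
qed

lemma ln_div_mono:
  assumes "0 < x" "x \<le> y"
  shows "ln x / real n \<le> ln y / real n"
  using assms by (intro divide_right_mono) auto

theorem lemma4p2:
  fixes T :: "'a::metric_space \<Rightarrow> 'a"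
    and \<phi> :: "nat \<Rightarrow> 'a \<Rightarrow> real"
    and k :: nat
    and M :: "'a measure"
  assumes "compact (UNIV :: 'a set)"
    and "continuous_on UNIV T"
    and "supadditive_potential T \<phi>"
    and "k \<ge> 1"
    and "prob_space M"
    and "sets M = sets borel"
    and "ergodic M T"
  shows "(\<exists>C. \<forall>\<eta>>0. \<exists>\<epsilon>0>0. \<forall>\<epsilon> n \<delta>. 0 < \<epsilon> \<and> \<epsilon> < \<epsilon>0 \<and> n \<ge> 1 \<and> 0 < \<delta> \<and> \<delta> < 1 \<longrightarrow>
            pressure_pot_n M T \<phi> n \<epsilon> \<delta> \<ge>
              exp (- real n * \<eta> - C) * pressure_fun_n M T (\<lambda>x. \<phi> k x / real k) n \<epsilon> \<delta>)
         \<and> pressure_pot M T \<phi> \<ge> pressure_fun M T (\<lambda>x. \<phi> k x / real k)"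
proof -
  note cpt = assms(1) and cT = assms(2) and sp = assms(3) and k = assms(4) and P = assms(5) and S = assms(6)
  have P1: "\<exists>C. \<forall>\<eta>>0. \<exists>\<epsilon>0>0. \<forall>\<epsilon> n \<delta>. 0 < \<epsilon> \<and> \<epsilon> < \<epsilon>0 \<and> n \<ge> 1 \<and> 0 < \<delta> \<and> \<delta> < 1 \<longrightarrow>
            pressure_pot_n M T \<phi> n \<epsilon> \<delta> \<ge>
              exp (- real n * \<eta> - C) * pressure_fun_n M T (\<lambda>x. \<phi> k x / real k) n \<epsilon> \<delta>"
    by (rule part1[OF cpt cT sp k P S])
  define \<psi> where "\<psi> = (\<lambda>x. \<phi> k x / real k)"
  obtain C where C: "\<forall>\<eta>>0. \<exists>\<epsilon>0>0. \<forall>\<epsilon> n \<delta>. 0 < \<epsilon> \<and> \<epsilon> < \<epsilon>0 \<and> n \<ge> 1 \<and> 0 < \<delta> \<and> \<delta> < 1 \<longrightarrow>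
            pressure_pot_n M T \<phi> n \<epsilon> \<delta> \<ge> exp (- real n * \<eta> - C) * pressure_fun_n M T \<psi> n \<epsilon> \<delta>"
    using P1[folded \<psi>_def] by (rule exE) assumption
  obtain B where B: "\<forall>j\<in>{1..k}. \<forall>x. \<bar>\<phi> j x\<bar> \<le> B" using pot_boundedk[OF cpt sp] by blast
  have psib: "\<bar>\<psi> y\<bar> \<le> B" for y
  proof -
    have "\<bar>\<phi> k y\<bar> \<le> B" using B[rule_format, of k] k by simp
    moreover have "\<bar>\<phi> k y\<bar> / real k \<le> \<bar>\<phi> k y\<bar>"
    proof -
      have "\<bar>\<phi> k y\<bar> * 1 \<le> \<bar>\<phi> k y\<bar> * real k" using k by (intro mult_left_mono) auto
      then show ?thesis using k by (simp add: divide_le_eq)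
    qed
    ultimately show ?thesis unfolding \<psi>_def by simp
  qed
  have ppos: "pressure_pot_n M T \<phi> n \<epsilon> \<delta> > 0" if "n \<ge> 1" "\<epsilon> > 0" "0 \<le> \<delta>" "\<delta> < 1" for n \<epsilon> \<delta>
    by (rule pot_pos[OF cpt cT sp P S that])
  have fpos: "pressure_fun_n M T \<psi> n \<epsilon> \<delta> > 0" if "\<epsilon> > 0" "0 \<le> \<delta>" "\<delta> < 1" for n \<epsilon> \<delta>
    by (rule fun_pos[OF cpt cT psib P S that])
  define a where "a \<delta> \<epsilon> = limsup (\<lambda>n. ereal (ln (pressure_pot_n M T \<phi> n \<epsilon> \<delta>) / real n))" for \<delta> \<epsilon>
  define b where "b \<delta> \<epsilon> = limsup (\<lambda>n. ereal (ln (pressure_fun_n M T \<psi> n \<epsilon> \<delta>) / real n))" for \<delta> \<epsilon>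
  define A where "A \<delta> = Lim (at_right 0) (a \<delta>)" for \<delta>
  define Bf where "Bf \<delta> = Liminf (at_right 0) (b \<delta>)" for \<delta>
  have potE: "pressure_pot M T \<phi> = Lim (at_right 0) A"
    unfolding pressure_pot_def A_def a_def by simp
  have funE: "pressure_fun M T (\<lambda>x. \<phi> k x / real k) = Lim (at_right 0) Bf"
    unfolding pressure_fun_def Bf_def b_def \<psi>_def by simp
  have Pp_eps: "pressure_pot_n M T \<phi> n \<epsilon>2 \<delta> \<le> pressure_pot_n M T \<phi> n \<epsilon>1 \<delta>"
    if "0 < \<epsilon>1" "\<epsilon>1 \<le> \<epsilon>2" "0 \<le> \<delta>" for n \<epsilon>1 \<epsilon>2 \<delta>
    unfolding pressure_pot_n_def
    apply (rule inf_mono_sets)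
    subgoal by (rule span_mono_eps[OF P S cT that(2)])
    subgoal by (rule span_exists[OF cpt cT P S that(1) that(3)])
    subgoal by (simp add: sum_nonneg)
    done
  have Pp_del: "pressure_pot_n M T \<phi> n \<epsilon> \<delta>2 \<le> pressure_pot_n M T \<phi> n \<epsilon> \<delta>1"
    if "0 < \<epsilon>" "0 \<le> \<delta>1" "\<delta>1 \<le> \<delta>2" for n \<epsilon> \<delta>1 \<delta>2
    unfolding pressure_pot_n_def
    apply (rule inf_mono_sets)
    subgoal by (rule span_mono_delta[OF that(3)])
    subgoal by (rule span_exists[OF cpt cT P S that(1) that(2)])
    subgoal by (simp add: sum_nonneg)
    done
  have Pf_del: "pressure_fun_n M T \<psi> n \<epsilon> \<delta>2 \<le> pressure_fun_n M T \<psi> n \<epsilon> \<delta>1"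
    if "0 < \<epsilon>" "0 \<le> \<delta>1" "\<delta>1 \<le> \<delta>2" for n \<epsilon> \<delta>1 \<delta>2
    unfolding pressure_fun_n_def
    apply (rule inf_mono_sets)
    subgoal by (rule span_mono_delta[OF that(3)])
    subgoal by (rule span_exists[OF cpt cT P S that(1) that(2)])
    subgoal by (simp add: sum_nonneg)
    done
  have a_eps: "a \<delta> \<epsilon>2 \<le> a \<delta> \<epsilon>1" if "0 < \<epsilon>1" "\<epsilon>1 \<le> \<epsilon>2" "0 \<le> \<delta>" "\<delta> < 1" for \<epsilon>1 \<epsilon>2 \<delta>
    unfolding a_def
  proof (intro Limsup_mono always_eventually allI)
    fix n :: nat
    show "ereal (ln (pressure_pot_n M T \<phi> n \<epsilon>2 \<delta>) / real n) \<le> ereal (ln (pressure_pot_n M T \<phi> n \<epsilon>1 \<delta>) / real n)"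
    proof (cases "n = 0")
      case False
      then have "n \<ge> 1" by simp
      then have "ln (pressure_pot_n M T \<phi> n \<epsilon>2 \<delta>) / real n \<le> ln (pressure_pot_n M T \<phi> n \<epsilon>1 \<delta>) / real n"
        using ppos[of n \<epsilon>2 \<delta>] that Pp_eps[OF that(1,2,3), of n] by (intro ln_div_mono) auto
      then show ?thesis by simp
    qed simp
  qed
  have a_del: "a \<delta>2 \<epsilon> \<le> a \<delta>1 \<epsilon>" if "0 < \<epsilon>" "0 \<le> \<delta>1" "\<delta>1 \<le> \<delta>2" "\<delta>2 < 1" for \<epsilon> \<delta>1 \<delta>2
    unfolding a_def
  proof (intro Limsup_mono always_eventually allI)
    fix n :: nat
    show "ereal (ln (pressure_pot_n M T \<phi> n \<epsilon> \<delta>2) / real n) \<le> ereal (ln (pressure_pot_n M T \<phi> n \<epsilon> \<delta>1) / real n)"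
    proof (cases "n = 0")
      case False
      then have "n \<ge> 1" by simp
      then have "ln (pressure_pot_n M T \<phi> n \<epsilon> \<delta>2) / real n \<le> ln (pressure_pot_n M T \<phi> n \<epsilon> \<delta>1) / real n"
        using ppos[of n \<epsilon> \<delta>2] that Pp_del[OF that(1,2,3), of n] by (intro ln_div_mono) auto
      then show ?thesis by simp
    qed simp
  qed
  have b_del: "b \<delta>2 \<epsilon> \<le> b \<delta>1 \<epsilon>" if "0 < \<epsilon>" "0 \<le> \<delta>1" "\<delta>1 \<le> \<delta>2" "\<delta>2 < 1" for \<epsilon> \<delta>1 \<delta>2
    unfolding b_def
  proof (intro Limsup_mono always_eventually allI)
    fix n :: nat
    show "ereal (ln (pressure_fun_n M T \<psi> n \<epsilon> \<delta>2) / real n) \<le> ereal (ln (pressure_fun_n M T \<psi> n \<epsilon> \<delta>1) / real n)"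
    proof -
      have "ln (pressure_fun_n M T \<psi> n \<epsilon> \<delta>2) / real n \<le> ln (pressure_fun_n M T \<psi> n \<epsilon> \<delta>1) / real n"
        using fpos[of \<epsilon> \<delta>2 n] that Pf_del[OF that(1,2,3), of n] by (intro ln_div_mono) auto
      then show ?thesis by simp
    qed
  qed
  have A_sup: "A \<delta> = (SUP \<epsilon>\<in>{0<..<1}. a \<delta> \<epsilon>)" if "0 \<le> \<delta>" "\<delta> < 1" for \<delta>
    unfolding A_def by (rule mono_lim_at_right) (use a_eps that in auto)
  have A_mono: "A \<delta>2 \<le> A \<delta>1" if "0 < \<delta>1" "\<delta>1 \<le> \<delta>2" "\<delta>2 < 1" for \<delta>1 \<delta>2
  proof -
    have "(SUP \<epsilon>\<in>{0<..<1}. a \<delta>2 \<epsilon>) \<le> (SUP \<epsilon>\<in>{0<..<1}. a \<delta>1 \<epsilon>)"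
    proof (rule SUP_mono)
      fix \<epsilon> :: real assume "\<epsilon> \<in> {0<..<1}"
      then show "\<exists>m\<in>{0<..<1}. a \<delta>2 \<epsilon> \<le> a \<delta>1 m" using a_del[of \<epsilon> \<delta>1 \<delta>2] that by auto
    qed
    moreover have "A \<delta>2 = (SUP \<epsilon>\<in>{0<..<1}. a \<delta>2 \<epsilon>)" using A_sup[of \<delta>2] that by simp
    moreover have "A \<delta>1 = (SUP \<epsilon>\<in>{0<..<1}. a \<delta>1 \<epsilon>)" using A_sup[of \<delta>1] that by simp
    ultimately show ?thesis by simp
  qed
  have Bf_mono: "Bf \<delta>2 \<le> Bf \<delta>1" if "0 < \<delta>1" "\<delta>1 \<le> \<delta>2" "\<delta>2 < 1" for \<delta>1 \<delta>2
    unfolding Bf_def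
  proof (rule Liminf_mono)
    show "\<forall>\<^sub>F x in at_right 0. b \<delta>2 x \<le> b \<delta>1 x"
      using eventually_at_right_less[of "0::real"]
    proof (rule eventually_mono)
      fix x :: real assume "0 < x"
      then show "b \<delta>2 x \<le> b \<delta>1 x" using b_del[of x \<delta>1 \<delta>2] that by auto
    qed
  qed
  have potS: "pressure_pot M T \<phi> = (SUP \<delta>\<in>{0<..<1}. A \<delta>)"
    unfolding potE by (rule mono_lim_at_right) (use A_mono in auto)
  have funS: "pressure_fun M T (\<lambda>x. \<phi> k x / real k) = (SUP \<delta>\<in>{0<..<1}. Bf \<delta>)"
    unfolding funE by (rule mono_lim_at_right) (use Bf_mono in auto)
  have key: "Bf \<delta> \<le> A \<delta>" if d: "0 < \<delta>" "\<delta> < 1" for \<delta>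
  proof (rule ereal_le_epsilon2)
    fix e :: real assume e: "0 < e"
    define \<eta> where "\<eta> = e / 2"
    have eta: "\<eta> > 0" using e unfolding \<eta>_def by simp
    have "\<exists>\<epsilon>0>0. \<forall>\<epsilon> n \<delta>. 0 < \<epsilon> \<and> \<epsilon> < \<epsilon>0 \<and> n \<ge> 1 \<and> 0 < \<delta> \<and> \<delta> < 1 \<longrightarrow>
            pressure_pot_n M T \<phi> n \<epsilon> \<delta> \<ge> exp (- real n * \<eta> - C) * pressure_fun_n M T \<psi> n \<epsilon> \<delta>"
      by (rule C[rule_format, OF eta])
    then obtain \<epsilon>0 where e0: "\<epsilon>0 > 0" and H0: "\<forall>\<epsilon> n \<delta>. 0 < \<epsilon> \<and> \<epsilon> < \<epsilon>0 \<and> n \<ge> 1 \<and> 0 < \<delta> \<and> \<delta> < 1 \<longrightarrow>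
            pressure_pot_n M T \<phi> n \<epsilon> \<delta> \<ge> exp (- real n * \<eta> - C) * pressure_fun_n M T \<psi> n \<epsilon> \<delta>"
      by (elim exE conjE) blast
    have H: "pressure_pot_n M T \<phi> n \<epsilon> \<delta> \<ge> exp (- real n * \<eta> - C) * pressure_fun_n M T \<psi> n \<epsilon> \<delta>"
      if "0 < \<epsilon>" "\<epsilon> < \<epsilon>0" "n \<ge> 1" for \<epsilon> n
      using H0[rule_format, of \<epsilon> n \<delta>] that d by blast
    obtain N0 :: nat where N0: "\<bar>C\<bar> / \<eta> < real N0" using reals_Archimedean2 by blast
    have bA: "b \<delta> \<epsilon> \<le> A \<delta> + ereal e" if ep: "0 < \<epsilon>" "\<epsilon> < \<epsilon>0" "\<epsilon> < 1" for \<epsilon>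
    proof -
      have ev: "eventually (\<lambda>n. ereal (ln (pressure_fun_n M T \<psi> n \<epsilon> \<delta>) / real n)
                \<le> ereal (ln (pressure_pot_n M T \<phi> n \<epsilon> \<delta>) / real n) + ereal e) sequentially"
        unfolding eventually_sequentially
      proof (intro exI[of _ "max 1 N0"] allI impI)
        fix n assume nN: "max 1 N0 \<le> n"
        then have n: "n \<ge> 1" and nN0: "real N0 \<le> real n" by auto
        define pp where "pp = pressure_pot_n M T \<phi> n \<epsilon> \<delta>"
        define pf where "pf = pressure_fun_n M T \<psi> n \<epsilon> \<delta>"
        have pf0: "pf > 0" unfolding pf_def by (rule fpos) (use ep d in auto)
        have pp0: "pp > 0" unfolding pp_def by (rule ppos) (use ep d n in auto)
        have "exp (- real n * \<eta> - C) * pf \<le> pp" unfolding pp_def pf_def by (rule H[OF ep(1,2) n])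
        then have "ln (exp (- real n * \<eta> - C) * pf) \<le> ln pp" using pf0 pp0 by simp
        then have l: "- real n * \<eta> - C + ln pf \<le> ln pp" using pf0 by (simp add: ln_mult)
        have c1: "\<bar>C\<bar> < \<eta> * real N0" using N0 eta by (simp add: divide_less_eq mult.commute)
        have c2: "\<eta> * real N0 \<le> \<eta> * real n" using nN0 eta by (intro mult_left_mono) auto
        have "\<bar>C\<bar> < \<eta> * real n" using c1 c2 by linarith
        moreover have "real n * \<eta> = \<eta> * real n" by simp
        moreover have "C \<le> \<bar>C\<bar>" by simp
        ultimately have "ln pf \<le> ln pp + 2 * \<eta> * real n" using l by linarith
        then have "ln pf / real n \<le> (ln pp + 2 * \<eta> * real n) / real n"
          using n by (intro divide_right_mono) auto
        also have "\<dots> = ln pp / real n + e" using n unfolding \<eta>_def by (simp add: add_divide_distrib)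
        finally show "ereal (ln pf / real n) \<le> ereal (ln pp / real n) + ereal e" by simp
      qed
      have "b \<delta> \<epsilon> \<le> limsup (\<lambda>n. ereal (ln (pressure_pot_n M T \<phi> n \<epsilon> \<delta>) / real n) + ereal e)"
        unfolding b_def by (rule Limsup_mono[OF ev])
      also have "\<dots> = a \<delta> \<epsilon> + ereal e" unfolding a_def
        by (rule Limsup_add_ereal_right) simp_all
      also have "\<dots> \<le> A \<delta> + ereal e"
      proof -
        have Ad: "A \<delta> = (SUP \<epsilon>\<in>{0<..<1}. a \<delta> \<epsilon>)" using A_sup[of \<delta>] d by simp
        have "a \<delta> \<epsilon> \<le> (SUP \<epsilon>\<in>{0<..<1}. a \<delta> \<epsilon>)" using ep by (intro SUP_upper) auto
        then have "a \<delta> \<epsilon> \<le> A \<delta>" using Ad by simp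
        then show ?thesis by (rule add_right_mono)
      qed
      finally show ?thesis .
    qed
    have ev2: "eventually (\<lambda>\<epsilon>. b \<delta> \<epsilon> \<le> A \<delta> + ereal e) (at_right 0)"
    proof (rule eventually_mono[OF eventually_at_right_real])
      show "(0::real) < min \<epsilon>0 1" using e0 by simp
      fix x :: real assume "x \<in> {0<..<min \<epsilon>0 1}"
      then show "b \<delta> x \<le> A \<delta> + ereal e" by (intro bA) auto
    qed
    have "Bf \<delta> \<le> Limsup (at_right 0) (b \<delta>)" unfolding Bf_def
      by (rule Liminf_le_Limsup) simp
    also have "\<dots> \<le> A \<delta> + ereal e" by (rule Limsup_bounded[OF ev2])
    finally show "Bf \<delta> \<le> A \<delta> + ereal e" .
  qed
  have "pressure_fun M T (\<lambda>x. \<phi> k x / real k) \<le> pressure_pot M T \<phi>"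
    unfolding funS potS
  proof (rule SUP_mono)
    fix \<delta> :: real assume "\<delta> \<in> {0<..<1}"
    then have "Bf \<delta> \<le> A \<delta>" using key by auto
    then show "\<exists>m\<in>{0<..<1}. Bf \<delta> \<le> A m" using \<open>\<delta> \<in> {0<..<1}\<close> by blast
  qed
  with P1 show ?thesis by blast
qed

end
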